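(* For all positive integers $a,b$, the Aztec rectangle $\mathcal{AR}_{a,b}$ (with no defects) has a cover by L-trominoes if and only if $a(b+1)+b(a+1)\equiv 0 \pmod 3$.
   Context: A cell is a unit square $[i,i+1]\times[j,j+1]$ with $i,j\in\mathbb{Z}$, labelled by its coordinate $(i,j)$. A region is a finite set of cells whose union is connected (cells sharing an edge are adjacent). An L-tromino is a set of three cells equal to a $2\times 2$ block of cells with one cell removed, i.e. a translate of one of $\{(0,0),(1,0),(0,1)\}$, $\{(0,0),(1,0),(1,1)\}$, $\{(0,0),(0,1),(1,1)\}$, $\{(1,0),(0,1),(1,1)\}$. Some cells of a region may be designated as defects. A cover (tiling) of a region $R$ with defect set $D\subseteq R$ is a set of pairwise disjoint L-trominoes, each contained in $R\setminus D$, whose union is exactly $R\setminus D$. For positive integers $a,b$, the Aztec rectangle $\mathcal{AR}_{a,b}$ is (up to translation) the region consisting of the cells $(i,j)\in\mathbb{Z}^2$ with $0\le i+j\le 2b$ and $1\le j-i\le 2a+1$; it has $a$ cells along its southwestern side, $b$ cells along its northwestern side, and $a(b+1)+b(a+1)$ cells in total. *)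

theory Defs
  imports Main
begin

type_synonym cell = "int \<times> int"

definition shift :: "cell \<Rightarrow> cell set \<Rightarrow> cell set" where
  "shift v S = (\<lambda>(i,j). (i + fst v, j + snd v)) ` S"

definition L_shapes :: "cell set set" where
  "L_shapes = {{(0,0),(1,0),(0,1)}, {(0,0),(1,0),(1,1)},
               {(0,0),(0,1),(1,1)}, {(1,0),(0,1),(1,1)}}"

definition is_L_tromino :: "cell set \<Rightarrow> bool" where
  "is_L_tromino T \<longleftrightarrow> (\<exists>v. \<exists>S\<in>L_shapes. T = shift v S)"

definition is_cover :: "cell set set \<Rightarrow> cell set \<Rightarrow> cell set \<Rightarrow> bool" where
  "is_cover C R D \<longleftrightarrow>
     (\<forall>T\<in>C. is_L_tromino T \<and> T \<subseteq> R - D) \<and>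
     (\<forall>T\<in>C. \<forall>T'\<in>C. T \<noteq> T' \<longrightarrow> T \<inter> T' = {}) \<and>
     \<Union>C = R - D"

definition tileable :: "cell set \<Rightarrow> cell set \<Rightarrow> bool" where
  "tileable R D \<longleftrightarrow> (\<exists>C. is_cover C R D)"

definition aztec_rectangle :: "nat \<Rightarrow> nat \<Rightarrow> cell set" where
  "aztec_rectangle a b =
     {(i,j). 0 \<le> i + j \<and> i + j \<le> 2 * int b \<and> 1 \<le> j - i \<and> j - i \<le> 2 * int a + 1}"

end

theory Submission
  imports Defs
begin

definition L1 :: "int \<Rightarrow> int \<Rightarrow> cell set" where "L1 x y = {(x,y),(x+1,y),(x,y+1)}"
definition L2 :: "int \<Rightarrow> int \<Rightarrow> cell set" where "L2 x y = {(x,y),(x+1,y),(x+1,y+1)}"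
definition L3 :: "int \<Rightarrow> int \<Rightarrow> cell set" where "L3 x y = {(x,y),(x,y+1),(x+1,y+1)}"
definition L4 :: "int \<Rightarrow> int \<Rightarrow> cell set" where "L4 x y = {(x+1,y),(x,y+1),(x+1,y+1)}"

lemma isL1: "is_L_tromino (L1 x y)"
  unfolding is_L_tromino_def L_shapes_def L1_def
  by (rule exI[of _ "(x,y)"], rule bexI[of _ "{(0,0),(1,0),(0,1)}"]) (auto simp: shift_def)
lemma isL2: "is_L_tromino (L2 x y)"
  unfolding is_L_tromino_def L_shapes_def L2_def
  by (rule exI[of _ "(x,y)"], rule bexI[of _ "{(0,0),(1,0),(1,1)}"]) (auto simp: shift_def)
lemma isL3: "is_L_tromino (L3 x y)"
  unfolding is_L_tromino_def L_shapes_def L3_def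
  by (rule exI[of _ "(x,y)"], rule bexI[of _ "{(0,0),(0,1),(1,1)}"]) (auto simp: shift_def)
lemma isL4: "is_L_tromino (L4 x y)"
  unfolding is_L_tromino_def L_shapes_def L4_def
  by (rule exI[of _ "(x,y)"], rule bexI[of _ "{(1,0),(0,1),(1,1)}"]) (auto simp: shift_def)

lemmas isL = isL1 isL2 isL3 isL4

lemma tileable_single: "is_L_tromino T \<Longrightarrow> tileable T {}"
  unfolding tileable_def is_cover_def by (rule exI[of _ "{T}"]) auto

lemma tileable_union:
  assumes "tileable R1 {}" "tileable R2 {}" "R1 \<inter> R2 = {}"
  shows "tileable (R1 \<union> R2) {}"
proof -
  obtain C1 where c1: "is_cover C1 R1 {}" using assms(1) tileable_def by blast
  obtain C2 where c2: "is_cover C2 R2 {}" using assms(2) tileable_def by blast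
  have s1: "\<forall>T\<in>C1. is_L_tromino T \<and> T \<subseteq> R1" "\<forall>T\<in>C1. \<forall>T'\<in>C1. T \<noteq> T' \<longrightarrow> T \<inter> T' = {}" "\<Union>C1 = R1"
    using c1 unfolding is_cover_def by auto
  have s2: "\<forall>T\<in>C2. is_L_tromino T \<and> T \<subseteq> R2" "\<forall>T\<in>C2. \<forall>T'\<in>C2. T \<noteq> T' \<longrightarrow> T \<inter> T' = {}" "\<Union>C2 = R2"
    using c2 unfolding is_cover_def by auto
  have d: "\<forall>T\<in>C1 \<union> C2. \<forall>T'\<in>C1 \<union> C2. T \<noteq> T' \<longrightarrow> T \<inter> T' = {}"
  proof (intro ballI impI)
    fix T T' assume t: "T \<in> C1 \<union> C2" "T' \<in> C1 \<union> C2" "T \<noteq> T'"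
    show "T \<inter> T' = {}"
    proof (cases "T \<in> C1")
      case True
      show ?thesis
      proof (cases "T' \<in> C1")
        case True then show ?thesis using s1 t \<open>T \<in> C1\<close> by blast
      next
        case False then have "T' \<subseteq> R2" using s2 t by blast
        moreover have "T \<subseteq> R1" using s1 \<open>T \<in> C1\<close> by blast
        ultimately show ?thesis using assms(3) by blast
      qed
    next
      case False then have tt: "T \<in> C2" "T \<subseteq> R2" using s2 t by blast+
      show ?thesis
      proof (cases "T' \<in> C2")
        case True then show ?thesis using s2 t tt by blast
      next
        case False then have "T' \<subseteq> R1" using s1 t by blast
        then show ?thesis using assms(3) tt by blast
      qed
    qed
  qed
  have "is_cover (C1 \<union> C2) (R1 \<union> R2) {}"
    unfolding is_cover_def using s1 s2 d by auto
  thus ?thesis unfolding tileable_def by blast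
qed

definition band :: "nat \<Rightarrow> int \<Rightarrow> cell set" where
  "band n k = {(i,j). 0 \<le> i+j \<and> i+j \<le> 2*int n \<and> 2*k \<le> j-i \<and> j-i \<le> 2*k+5}"

lemma box: "(a::int) \<le> x \<Longrightarrow> x \<le> b \<Longrightarrow> x \<in> set [a..b]" by simp

lemma band1: "band 1 k = L3 (-2-k) (2+k) \<union> L3 (-1-k) (1+k) \<union> L3 (-k) k"
proof (rule set_eqI, rule iffI)
  fix p assume "p \<in> band 1 k"
  then obtain i j where p: "p = (i,j)" and h: "0 \<le> i+j" "i+j \<le> 2" "2*k \<le> j-i" "j-i \<le> 2*k+5"
    by (auto simp: band_def)
  define u v where "u = i + k" and "v = j - k"
  have ij: "i = u - k" "j = v + k" by (simp_all add: u_def v_def)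
  have h2: "0 \<le> u+v" "u+v \<le> 2" "0 \<le> v-u" "v-u \<le> 5" using h by (simp_all add: u_def v_def)
  have "u \<in> set [-3..1]" "v \<in> set [0..4]" using h2 by (intro box; linarith)+
  thus "p \<in> L3 (-2-k) (2+k) \<union> L3 (-1-k) (1+k) \<union> L3 (-k) k"
    using h2 unfolding p ij
    apply (simp add: upto.simps) apply (elim disjE) by (simp_all add: L3_def)
next
  fix p assume "p \<in> L3 (-2-k) (2+k) \<union> L3 (-1-k) (1+k) \<union> L3 (-k) k"
  moreover have "L3 (-2-k) (2+k) \<union> L3 (-1-k) (1+k) \<union> L3 (-k) k \<subseteq> band 1 k"
    by (auto simp: band_def L3_def)
  ultimately show "p \<in> band 1 k" by blast
qed

lemma band_step: "band (Suc n) k = band n k \<union> (L1 (int n-k) (int n+k+1) \<union> L4 (int n-k-2) (int n+k+2))"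
proof (rule set_eqI, rule iffI)
  fix p assume a: "p \<in> band (Suc n) k"
  then obtain i j where p: "p = (i,j)" and h: "0 \<le> i+j" "i+j \<le> 2*int n + 2" "2*k \<le> j-i" "j-i \<le> 2*k+5"
    by (auto simp: band_def)
  show "p \<in> band n k \<union> (L1 (int n-k) (int n+k+1) \<union> L4 (int n-k-2) (int n+k+2))"
  proof (cases "i + j \<le> 2 * int n")
    case True thus ?thesis using h by (simp add: p band_def)
  next
    case False
    define u v where "u = i + k - int n" and "v = j - k - int n"
    have ij: "i = u - k + int n" "j = v + k + int n" by (simp_all add: u_def v_def)
    have h2: "1 \<le> u+v" "u+v \<le> 2" "0 \<le> v-u" "v-u \<le> 5" using h False by (simp_all add: u_def v_def)
    have "u \<in> set [-2..1]" "v \<in> set [1..4]" using h2 by (intro box; linarith)+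
    thus ?thesis
      using h2 unfolding p ij
      apply (simp add: upto.simps) apply (elim disjE) by (simp_all add: L1_def L4_def)
  qed
next
  fix p assume "p \<in> band n k \<union> (L1 (int n-k) (int n+k+1) \<union> L4 (int n-k-2) (int n+k+2))"
  moreover have "L1 (int n-k) (int n+k+1) \<subseteq> band (Suc n) k" by (simp add: L1_def band_def)
  moreover have "L4 (int n-k-2) (int n+k+2) \<subseteq> band (Suc n) k" by (simp add: L4_def band_def)
  moreover have "band n k \<subseteq> band (Suc n) k" by (auto simp: band_def)
  ultimately show "p \<in> band (Suc n) k" by blast
qed

lemma band_tileable: "n \<ge> 1 \<Longrightarrow> tileable (band n k) {}"
proof (induction n rule: nat_induct_at_least)
  case base
  show ?case unfolding band1
    by (intro tileable_union tileable_single isL; auto simp: L3_def)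
next
  case (Suc n)
  show ?case unfolding band_step
    apply (intro tileable_union Suc.IH tileable_single isL)
     apply (auto simp: L1_def L4_def band_def)
    done
qed

lemma AR_step: "aztec_rectangle (a+3) b = aztec_rectangle a b \<union> band b (int a + 1)"
  unfolding aztec_rectangle_def band_def
  apply (rule set_eqI) apply clarsimp by presburger

lemma AR_step_disj: "aztec_rectangle a b \<inter> band b (int a + 1) = {}"
  unfolding aztec_rectangle_def band_def by auto

lemma AR_ext: "b \<ge> 1 \<Longrightarrow> tileable (aztec_rectangle a b) {} \<Longrightarrow> tileable (aztec_rectangle (a+3) b) {}"
  unfolding AR_step by (intro tileable_union band_tileable AR_step_disj)

lemma s1: "shift (x,y) {(0,0),(1,0),(0,1)} = L1 x y" by (simp add: shift_def L1_def add.commute)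
lemma s2: "shift (x,y) {(0,0),(1,0),(1,1)} = L2 x y" by (simp add: shift_def L2_def add.commute)
lemma s3: "shift (x,y) {(0,0),(0,1),(1,1)} = L3 x y" by (simp add: shift_def L3_def add.commute)
lemma s4: "shift (x,y) {(1,0),(0,1),(1,1)} = L4 x y" by (simp add: shift_def L4_def add.commute)
lemma L_cases: "is_L_tromino T \<Longrightarrow> \<exists>x y. T = L1 x y \<or> T = L2 x y \<or> T = L3 x y \<or> T = L4 x y"
proof -
  assume "is_L_tromino T"
  then obtain v S where "S \<in> L_shapes" "T = shift v S" unfolding is_L_tromino_def by blast
  moreover obtain x y where "v = (x,y)" by fastforce
  ultimately show ?thesis unfolding L_shapes_def using s1 s2 s3 s4 by blast
qed

definition refl :: "cell \<Rightarrow> cell" where "refl p = (- fst p - 1, snd p)"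
lemma inj_refl: "inj refl" unfolding inj_def refl_def by auto
lemma refl_L: "is_L_tromino T \<Longrightarrow> is_L_tromino (refl ` T)"
proof -
  assume "is_L_tromino T"
  then obtain x y where "T = L1 x y \<or> T = L2 x y \<or> T = L3 x y \<or> T = L4 x y" using L_cases by blast
  moreover have "refl ` L1 x y = L2 (-x-2) y" by (auto simp: refl_def L1_def L2_def)
  moreover have "refl ` L2 x y = L1 (-x-2) y" by (auto simp: refl_def L1_def L2_def)
  moreover have "refl ` L3 x y = L4 (-x-2) y" by (auto simp: refl_def L3_def L4_def)
  moreover have "refl ` L4 x y = L3 (-x-2) y" by (auto simp: refl_def L3_def L4_def)
  ultimately show ?thesis using isL by metis
qed

lemma tileable_refl: "tileable R {} \<Longrightarrow> tileable (refl ` R) {}"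
proof -
  assume "tileable R {}"
  then obtain C where c: "is_cover C R {}" unfolding tileable_def by blast
  have c1: "\<forall>T\<in>C. is_L_tromino T \<and> T \<subseteq> R" "\<forall>T\<in>C. \<forall>T'\<in>C. T \<noteq> T' \<longrightarrow> T \<inter> T' = {}" "\<Union>C = R"
    using c unfolding is_cover_def by auto
  have "\<forall>T\<in>(`) refl ` C. is_L_tromino T \<and> T \<subseteq> refl ` R"
  proof
    fix T assume "T \<in> (`) refl ` C"
    then obtain A where "A \<in> C" "T = refl ` A" by blast
    thus "is_L_tromino T \<and> T \<subseteq> refl ` R" using c1(1) refl_L by blast
  qed
  moreover have "\<forall>T\<in>(`) refl ` C. \<forall>T'\<in>(`) refl ` C. T \<noteq> T' \<longrightarrow> T \<inter> T' = {}"
  proof (intro ballI impI)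
    fix T T' assume "T \<in> (`) refl ` C" "T' \<in> (`) refl ` C" "T \<noteq> T'"
    then obtain A B where "A \<in> C" "B \<in> C" "T = refl ` A" "T' = refl ` B" "A \<noteq> B" by blast
    hence "A \<inter> B = {}" using c1(2) by blast
    thus "T \<inter> T' = {}" using \<open>T = refl ` A\<close> \<open>T' = refl ` B\<close> image_Int[OF inj_refl, of A B] by simp
  qed
  moreover have "\<Union>((`) refl ` C) = refl ` R" using c1(3) image_Union by metis
  ultimately have "is_cover ((`) refl ` C) (refl ` R) {}" unfolding is_cover_def by simp
  thus ?thesis unfolding tileable_def by blast
qed

lemma AR_refl: "refl ` aztec_rectangle b a = aztec_rectangle a b"
proof (rule set_eqI)
  fix p :: cell
  obtain i j where p: "p = (i,j)" by fastforce
  show "p \<in> refl ` aztec_rectangle b a \<longleftrightarrow> p \<in> aztec_rectangle a b"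
  proof
    assume "p \<in> refl ` aztec_rectangle b a"
    thus "p \<in> aztec_rectangle a b" by (auto simp: refl_def aztec_rectangle_def)
  next
    assume "p \<in> aztec_rectangle a b"
    hence "(-i-1,j) \<in> aztec_rectangle b a" by (auto simp: p aztec_rectangle_def)
    moreover have "p = refl (-i-1,j)" by (simp add: p refl_def)
    ultimately show "p \<in> refl ` aztec_rectangle b a" by blast
  qed
qed

lemma AR_swap: "tileable (aztec_rectangle b a) {} \<Longrightarrow> tileable (aztec_rectangle a b) {}"
  using tileable_refl AR_refl by metis

lemma AR22: "tileable (aztec_rectangle 2 2) {}"
proof -
  have e: "aztec_rectangle 2 2 = L1 (-2) 2 \<union> L2 (-1) 1 \<union> L3 (-1) 3 \<union> L4 0 2"
  proof (rule set_eqI, rule iffI)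
    fix p assume "p \<in> aztec_rectangle 2 2"
    then obtain i j where p: "p = (i,j)" and h: "0 \<le> i + j" "i + j \<le> 4" "1 \<le> j - i" "j - i \<le> 5"
      by (auto simp: aztec_rectangle_def)
    have "i \<in> set [-2..2]" "j \<in> set [0..4]" using h by (intro box; linarith)+
    thus "p \<in> L1 (-2) 2 \<union> L2 (-1) 1 \<union> L3 (-1) 3 \<union> L4 0 2"
      using h unfolding p by (simp add: upto.simps L1_def L2_def L3_def L4_def; elim disjE; simp)
  qed (auto simp: aztec_rectangle_def L1_def L2_def L3_def L4_def)
  show ?thesis unfolding e
    by (intro tileable_union tileable_single isL; auto simp: L1_def L2_def L3_def L4_def)
qed

lemma AR33: "tileable (aztec_rectangle 3 3) {}"
proof -
  have e: "aztec_rectangle 3 3 = L1 (-3) 3 \<union> L2 (-2) 2 \<union> L1 (-2) 4 \<union> L2 (-1) 1 \<union> L3 (-1) 5 \<union> L4 0 2 \<union> L3 0 4 \<union> L4 1 3"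
  proof (rule set_eqI, rule iffI)
    fix p assume "p \<in> aztec_rectangle 3 3"
    then obtain i j where p: "p = (i,j)" and h: "0 \<le> i + j" "i + j \<le> 6" "1 \<le> j - i" "j - i \<le> 7"
      by (auto simp: aztec_rectangle_def)
    have "i \<in> set [-3..3]" "j \<in> set [0..6]" using h by (intro box; linarith)+
    thus "p \<in> L1 (-3) 3 \<union> L2 (-2) 2 \<union> L1 (-2) 4 \<union> L2 (-1) 1 \<union> L3 (-1) 5 \<union> L4 0 2 \<union> L3 0 4 \<union> L4 1 3"
      using h unfolding p by (simp add: upto.simps L1_def L2_def L3_def L4_def; elim disjE; simp)
  qed (auto simp: aztec_rectangle_def L1_def L2_def L3_def L4_def)
  show ?thesis unfolding e
    by (intro tileable_union tileable_single isL; auto simp: L1_def L2_def L3_def L4_def)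
qed

lemma AR_ext_m: "b \<ge> 1 \<Longrightarrow> tileable (aztec_rectangle a b) {} \<Longrightarrow> tileable (aztec_rectangle (a+3*m) b) {}"
proof (induction m)
  case 0 then show ?case by simp
next
  case (Suc m)
  then have "tileable (aztec_rectangle (a+3*m+3) b) {}" using AR_ext by blast
  moreover have "a + 3 * Suc m = a + 3 * m + 3" by simp
  ultimately show ?case by metis
qed

lemma AR_ext2: "a \<ge> 1 \<Longrightarrow> b \<ge> 1 \<Longrightarrow> tileable (aztec_rectangle a b) {} \<Longrightarrow> tileable (aztec_rectangle (a+3*m) (b+3*n)) {}"
proof -
  assume h: "a \<ge> 1" "b \<ge> 1" "tileable (aztec_rectangle a b) {}"
  have "tileable (aztec_rectangle (a+3*m) b) {}" using AR_ext_m h by blast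
  hence "tileable (aztec_rectangle b (a+3*m)) {}" by (rule AR_swap)
  hence "tileable (aztec_rectangle (b+3*n) (a+3*m)) {}" using AR_ext_m h by simp
  thus ?thesis by (rule AR_swap)
qed

definition fE :: "int \<times> int \<Rightarrow> cell" where "fE x = (snd x - fst x - 1, snd x + fst x + 1)"
definition fO :: "int \<times> int \<Rightarrow> cell" where "fO x = (snd x - fst x, snd x + fst x + 1)"

lemma AR_decomp: "aztec_rectangle a b = fE ` ({0..<int a} \<times> {0..int b}) \<union> fO ` ({0..int a} \<times> {0..<int b})"
proof (rule set_eqI)
  fix p :: cell
  obtain i j where p: "p = (i,j)" by fastforce
  show "p \<in> aztec_rectangle a b \<longleftrightarrow> p \<in> fE ` ({0..<int a} \<times> {0..int b}) \<union> fO ` ({0..int a} \<times> {0..<int b})"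
  proof
    assume h: "p \<in> aztec_rectangle a b"
    hence h': "0 \<le> i + j \<and> i + j \<le> 2 * int b \<and> 1 \<le> j - i \<and> j - i \<le> 2 * int a + 1"
      by (simp add: p aztec_rectangle_def)
    show "p \<in> fE ` ({0..<int a} \<times> {0..int b}) \<union> fO ` ({0..int a} \<times> {0..<int b})"
    proof (cases "even (j - i)")
      case True
      then obtain r where r: "j - i = 2*r" by blast
      have "even (i+j)" using True by presburger
      then obtain q where q: "i + j = 2*q" by blast
      have "p = fE (r-1, q)" using r q by (simp add: p fE_def)
      moreover have "(r-1,q) \<in> {0..<int a} \<times> {0..int b}" using r q h' by auto
      ultimately show ?thesis by blast
    next
      case False
      then obtain r where r: "j - i = 2*r+1" by (metis oddE)
      have "odd (i+j)" using False by presburger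
      then obtain q where q: "i + j = 2*q+1" by (metis oddE)
      have "p = fO (r, q)" using r q by (simp add: p fO_def)
      moreover have "(r,q) \<in> {0..int a} \<times> {0..<int b}" using r q h' by auto
      ultimately show ?thesis by blast
    qed
  next
    assume "p \<in> fE ` ({0..<int a} \<times> {0..int b}) \<union> fO ` ({0..int a} \<times> {0..<int b})"
    thus "p \<in> aztec_rectangle a b" by (auto simp: fE_def fO_def aztec_rectangle_def)
  qed
qed

lemma AR_finite: "finite (aztec_rectangle a b)"
  unfolding AR_decomp by simp

lemma AR_card: "card (aztec_rectangle a b) = a*(b+1) + b*(a+1)"
proof -
  have i1: "inj fE" unfolding inj_def fE_def by auto
  have i2: "inj fO" unfolding inj_def fO_def by auto
  have ne: "fE x \<noteq> fO y" for x y
  proof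
    assume "fE x = fO y"
    hence "snd (fE x) - fst (fE x) = snd (fO y) - fst (fO y)" by simp
    hence "2 * fst x + 2 = 2 * fst y + 1" by (simp add: fE_def fO_def)
    thus False by presburger
  qed
  have d: "fE ` ({0..<int a} \<times> {0..int b}) \<inter> fO ` ({0..int a} \<times> {0..<int b}) = {}"
    using ne by blast
  have "card (aztec_rectangle a b) = card (fE ` ({0..<int a} \<times> {0..int b})) + card (fO ` ({0..int a} \<times> {0..<int b}))"
    unfolding AR_decomp by (rule card_Un_disjoint) (use d in auto)
  also have "\<dots> = card ({0..<int a} \<times> {0..int b}) + card ({0..int a} \<times> {0..<int b})"
    using i1 i2 by (simp add: card_image inj_on_subset)
  also have "\<dots> = a*(b+1) + b*(a+1)" by (simp add: card_cartesian_product nat_add_distrib)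
  finally show ?thesis .
qed

lemma modlem: "((a::nat) * (b + 1) + b * (a + 1)) mod 3 = ((a mod 3) * (b mod 3 + 1) + (b mod 3) * (a mod 3 + 1)) mod 3"
proof -
  define p r q s where "p = a div 3" and "r = a mod 3" and "q = b div 3" and "s = b mod 3"
  have a: "a = 3*p + r" and b: "b = 3*q + s" by (simp_all add: p_def r_def q_def s_def)
  define X Y where "X = 6*p*q + 2*p*s + p + 2*q*r + q" and "Y = r*(s+1) + s*(r+1)"
  have "a * (b + 1) + b * (a + 1) = 3*X + Y"
    unfolding a b X_def Y_def by (simp add: algebra_simps)
  hence "(a * (b + 1) + b * (a + 1)) mod 3 = Y mod 3" by simp
  hence "(a * (b + 1) + b * (a + 1)) mod 3 = (r*(s+1) + s*(r+1)) mod 3" by (simp add: Y_def)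
  thus ?thesis by (simp add: r_def s_def)
qed

lemma L_card: "is_L_tromino T \<Longrightarrow> card T = 3"
proof -
  assume "is_L_tromino T"
  then obtain x y where "T = L1 x y \<or> T = L2 x y \<or> T = L3 x y \<or> T = L4 x y" using L_cases by blast
  thus ?thesis by (elim disjE) (simp_all add: L1_def L2_def L3_def L4_def)
qed

lemma tileable_card: "finite R \<Longrightarrow> tileable R {} \<Longrightarrow> card R mod 3 = 0"
proof -
  assume f: "finite R" and "tileable R {}"
  then obtain C where c: "is_cover C R {}" unfolding tileable_def by blast
  have c1: "\<And>T. T \<in> C \<Longrightarrow> is_L_tromino T" "\<And>T. T \<in> C \<Longrightarrow> T \<subseteq> R"
     "\<And>T T'. T \<in> C \<Longrightarrow> T' \<in> C \<Longrightarrow> T \<noteq> T' \<Longrightarrow> T \<inter> T' = {}" "\<Union>C = R"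
    using c unfolding is_cover_def by auto
  have "C \<subseteq> Pow R" using c1(2) by blast
  moreover have "finite (Pow R)" using f by simp
  ultimately have fc: "finite C" by (rule finite_subset)
  have pw: "pairwise disjnt C" unfolding pairwise_def disjnt_def using c1(3) by blast
  have fa: "finite A" if "A \<in> C" for A using c1(2)[OF that] f by (rule finite_subset)
  have "card R = card (\<Union>C)" using c1(4) by simp
  also have "\<dots> = sum card C" by (rule card_Union_disjoint[OF pw fa])
  also have "\<dots> = sum (\<lambda>_. 3) C" by (rule sum.cong) (simp_all add: c1(1) L_card)
  finally show ?thesis by simp
qed

theorem theorem1:
  fixes a b :: nat
  assumes "a > 0" and "b > 0"
  shows "tileable (aztec_rectangle a b) {} \<longleftrightarrow> (a * (b + 1) + b * (a + 1)) mod 3 = 0"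
proof
  assume "tileable (aztec_rectangle a b) {}"
  thus "(a * (b + 1) + b * (a + 1)) mod 3 = 0" using tileable_card[OF AR_finite, of a b] AR_card[of a b] by simp
next
  assume h: "(a * (b + 1) + b * (a + 1)) mod 3 = 0"
  have e: "(a * (b + 1) + b * (a + 1)) mod 3 = ((a mod 3) * (b mod 3 + 1) + (b mod 3) * (a mod 3 + 1)) mod 3"
    by (rule modlem)
  have ra: "a mod 3 < 3" "b mod 3 < 3" by auto
  have cases: "(a mod 3 = 0 \<and> b mod 3 = 0) \<or> (a mod 3 = 2 \<and> b mod 3 = 2)"
  proof -
    have ha: "a mod 3 = 0 \<or> a mod 3 = 1 \<or> a mod 3 = 2" by arith
    have hb: "b mod 3 = 0 \<or> b mod 3 = 1 \<or> b mod 3 = 2" by arith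
    from ha hb show ?thesis using h e by (elim disjE) simp_all
  qed
  thus "tileable (aztec_rectangle a b) {}"
  proof
    assume c: "a mod 3 = 0 \<and> b mod 3 = 0"
    have "a = 3 + 3*(a div 3 - 1)" "b = 3 + 3*(b div 3 - 1)" using c assms by presburger+
    thus ?thesis using AR_ext2[OF _ _ AR33, of "a div 3 - 1" "b div 3 - 1"] by simp
  next
    assume c: "a mod 3 = 2 \<and> b mod 3 = 2"
    have "a = 2 + 3*(a div 3)" "b = 2 + 3*(b div 3)" using c by presburger+
    thus ?thesis using AR_ext2[OF _ _ AR22, of "a div 3" "b div 3"] by simp
  qed
qed

end
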